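(* Let $n\ge1$, $X=\{1,\dots,n\}$, $\mathcal{A}$ the algebra of all functions $X\to\mathbb{R}$ with pointwise operations, $\sigma:X\to X$ a bijection, $\tilde{\sigma}(f)=f\circ\sigma^{-1}$, and $\Delta$ a $\tilde{\sigma}$-derivation on $\mathcal{A}$. If an element $\sum_{k=0}^m f_kx^k$ of degree $m$ (so $f_m\neq0$) of the Ore extension $\mathcal{A}[x,\tilde{\sigma},\Delta]$ belongs to the centralizer of $\mathcal{A}$, then $f_m=0$ on $Sep^m(X)$.
   Context: A $\tilde{\sigma}$-derivation is an $\mathbb{R}$-linear map $\Delta:\mathcal{A}\to\mathcal{A}$ with $\Delta(fg)=\tilde{\sigma}(f)\Delta(g)+\Delta(f)g$. The Ore extension $\mathcal{A}[x,\tilde{\sigma},\Delta]$ is the ring generated by $\mathcal{A}$ and an element $x$ such that $1,x,x^2,\dots$ form a basis as a left $\mathcal{A}$-module and $xf=\tilde{\sigma}(f)x+\Delta(f)$ for all $f\in\mathcal{A}$. The centralizer of $\mathcal{A}$ is the set of elements commuting with every element of $\mathcal{A}$. $Sep^m(X)=\{p\in X:\sigma^m(p)\neq p\}$. *)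

theory Defs
  imports Complex_Main
begin

definition sigma_tilde :: "('n \<Rightarrow> 'n) \<Rightarrow> ('n \<Rightarrow> real) \<Rightarrow> ('n \<Rightarrow> real)" where
  "sigma_tilde \<sigma> f = f \<circ> inv \<sigma>"

definition is_sigma_derivation :: "('n \<Rightarrow> 'n) \<Rightarrow> (('n \<Rightarrow> real) \<Rightarrow> ('n \<Rightarrow> real)) \<Rightarrow> bool" where
  "is_sigma_derivation \<sigma> \<Delta> \<longleftrightarrow>
     (\<forall>f g. \<Delta> (\<lambda>t. f t + g t) = (\<lambda>t. \<Delta> f t + \<Delta> g t)) \<and>
     (\<forall>c f. \<Delta> (\<lambda>t. c * f t) = (\<lambda>t. c * \<Delta> f t)) \<and>
     (\<forall>f g. \<Delta> (\<lambda>t. f t * g t) = (\<lambda>t. sigma_tilde \<sigma> f t * \<Delta> g t + \<Delta> f t * g t))"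

text \<open>Elements of the Ore extension A[x, sigma_tilde, Delta] are represented by their
  coefficient sequences c :: nat \<Rightarrow> A (element \<Sum> c_j x^j, finitely supported).
  Left multiplication by x, using x h = sigma_tilde(h) x + Delta(h):
  x \<cdot> \<Sum> c_j x^j = \<Sum> (sigma_tilde(c_j) x^(j+1) + Delta(c_j) x^j).\<close>
definition ore_xmul :: "('n \<Rightarrow> 'n) \<Rightarrow> (('n \<Rightarrow> real) \<Rightarrow> ('n \<Rightarrow> real))
    \<Rightarrow> (nat \<Rightarrow> 'n \<Rightarrow> real) \<Rightarrow> (nat \<Rightarrow> 'n \<Rightarrow> real)" where
  "ore_xmul \<sigma> \<Delta> c = (\<lambda>j t. (if j = 0 then 0 else sigma_tilde \<sigma> (c (j - 1)) t) + \<Delta> (c j) t)"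

text \<open>Coefficients of x^k \<cdot> g in normal form (g \<in> A).\<close>
definition ore_xpow_times :: "('n \<Rightarrow> 'n) \<Rightarrow> (('n \<Rightarrow> real) \<Rightarrow> ('n \<Rightarrow> real))
    \<Rightarrow> nat \<Rightarrow> ('n \<Rightarrow> real) \<Rightarrow> (nat \<Rightarrow> 'n \<Rightarrow> real)" where
  "ore_xpow_times \<sigma> \<Delta> k g = (ore_xmul \<sigma> \<Delta> ^^ k) (\<lambda>i. if i = 0 then g else (\<lambda>_. 0))"

definition ore_mult_right :: "('n \<Rightarrow> 'n) \<Rightarrow> (('n \<Rightarrow> real) \<Rightarrow> ('n \<Rightarrow> real))
    \<Rightarrow> (nat \<Rightarrow> 'n \<Rightarrow> real) \<Rightarrow> nat \<Rightarrow> ('n \<Rightarrow> real) \<Rightarrow> (nat \<Rightarrow> 'n \<Rightarrow> real)" where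
  "ore_mult_right \<sigma> \<Delta> f m g = (\<lambda>j t. \<Sum>k\<le>m. f k t * ore_xpow_times \<sigma> \<Delta> k g j t)"

definition ore_mult_left :: "(nat \<Rightarrow> 'n \<Rightarrow> real) \<Rightarrow> nat \<Rightarrow> ('n \<Rightarrow> real) \<Rightarrow> (nat \<Rightarrow> 'n \<Rightarrow> real)" where
  "ore_mult_left f m g = (\<lambda>j t. if j \<le> m then g t * f j t else 0)"

definition in_centralizer :: "('n \<Rightarrow> 'n) \<Rightarrow> (('n \<Rightarrow> real) \<Rightarrow> ('n \<Rightarrow> real))
    \<Rightarrow> (nat \<Rightarrow> 'n \<Rightarrow> real) \<Rightarrow> nat \<Rightarrow> bool" where
  "in_centralizer \<sigma> \<Delta> f m \<longleftrightarrow> (\<forall>g. ore_mult_right \<sigma> \<Delta> f m g = ore_mult_left f m g)"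

definition Sep :: "nat \<Rightarrow> ('n \<Rightarrow> 'n) \<Rightarrow> 'n set" where
  "Sep m \<sigma> = {p. (\<sigma> ^^ m) p \<noteq> p}"

end

theory Submission
  imports Defs
begin

lemma delta_zero:
  assumes "is_sigma_derivation \<sigma> \<Delta>"
  shows "\<Delta> (\<lambda>_. 0) = (\<lambda>_. 0)"
proof -
  have "\<forall>c f. \<Delta> (\<lambda>t. c * f t) = (\<lambda>t. c * \<Delta> f t)"
    using assms unfolding is_sigma_derivation_def by blast
  from this[rule_format, of 0 "\<lambda>_. 0"] show ?thesis by simp
qed

lemma xpow_props:
  assumes "is_sigma_derivation \<sigma> \<Delta>"
  shows "(\<forall>j>k. ore_xpow_times \<sigma> \<Delta> k g j = (\<lambda>_. 0)) \<and>
         ore_xpow_times \<sigma> \<Delta> k g k = (\<lambda>t. g (((inv \<sigma>) ^^ k) t))"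
proof (induction k)
  case 0
  then show ?case by (simp add: ore_xpow_times_def)
next
  case (Suc k)
  have rec: "ore_xpow_times \<sigma> \<Delta> (Suc k) g = ore_xmul \<sigma> \<Delta> (ore_xpow_times \<sigma> \<Delta> k g)"
    by (simp add: ore_xpow_times_def)
  have dz: "\<Delta> (\<lambda>_. 0) = (\<lambda>_. 0)" using delta_zero[OF assms] .
  have A: "\<forall>j>Suc k. ore_xpow_times \<sigma> \<Delta> (Suc k) g j = (\<lambda>_. 0)"
  proof (intro allI impI)
    fix j assume j: "j > Suc k"
    then have "ore_xpow_times \<sigma> \<Delta> k g (j - 1) = (\<lambda>_. 0)" "ore_xpow_times \<sigma> \<Delta> k g j = (\<lambda>_. 0)"
      using Suc.IH by auto
    then show "ore_xpow_times \<sigma> \<Delta> (Suc k) g j = (\<lambda>_. 0)"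
      using j dz by (simp add: rec ore_xmul_def sigma_tilde_def comp_def)
  qed
  have "ore_xpow_times \<sigma> \<Delta> k g (Suc k) = (\<lambda>_. 0)" using Suc.IH by auto
  then have B: "ore_xpow_times \<sigma> \<Delta> (Suc k) g (Suc k) = (\<lambda>t. g (((inv \<sigma>) ^^ (Suc k)) t))"
    using Suc.IH dz by (simp add: rec ore_xmul_def sigma_tilde_def comp_def funpow_Suc_right del: funpow.simps)
  show ?case using A B by blast
qed

lemma funpow_inv_cancel:
  fixes \<sigma> :: "'a \<Rightarrow> 'a"
  assumes "bij \<sigma>"
  shows "(\<sigma> ^^ m) (((inv \<sigma>) ^^ m) x) = x"
proof (induction m arbitrary: x)
  case 0 then show ?case by (simp only: funpow_0 funpow.simps id_apply)
next
  case (Suc m)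
  have "(\<sigma> ^^ Suc m) (((inv \<sigma>) ^^ Suc m) x) = (\<sigma> ^^ m) (\<sigma> (inv \<sigma> (((inv \<sigma>) ^^ m) x)))"
    by (simp only: funpow_Suc_right[of m \<sigma>] funpow.simps(2)[of m "inv \<sigma>"] comp_apply)
  also have "\<dots> = x" using assms Suc.IH by (simp add: bij_is_surj surj_f_inv_f)
  finally show ?case .
qed

theorem theorem4:
  fixes \<sigma> :: "'n::finite \<Rightarrow> 'n"
    and \<Delta> :: "('n \<Rightarrow> real) \<Rightarrow> ('n \<Rightarrow> real)"
    and f :: "nat \<Rightarrow> 'n \<Rightarrow> real"
    and m :: nat
  assumes "bij \<sigma>"
    and "is_sigma_derivation \<sigma> \<Delta>"
    and "f m \<noteq> (\<lambda>_. 0)"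
    and "in_centralizer \<sigma> \<Delta> f m"
  shows "\<forall>p \<in> Sep m \<sigma>. f m p = 0"
proof
  fix p assume "p \<in> Sep m \<sigma>"
  then have sp: "(\<sigma> ^^ m) p \<noteq> p" by (simp add: Sep_def)
  have ne: "((inv \<sigma>) ^^ m) p \<noteq> p"
    using funpow_inv_cancel[OF assms(1), of m p] sp by metis
  define g :: "'n \<Rightarrow> real" where "g = (\<lambda>t. if t = p then 1 else 0)"
  have eq: "ore_mult_right \<sigma> \<Delta> f m g m p = ore_mult_left f m g m p"
    using assms(4) unfolding in_centralizer_def by metis
  have "ore_mult_right \<sigma> \<Delta> f m g m p = (\<Sum>k\<le>m. f k p * ore_xpow_times \<sigma> \<Delta> k g m p)"
    by (simp add: ore_mult_right_def)
  also have "\<dots> = f m p * ore_xpow_times \<sigma> \<Delta> m g m p"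
  proof -
    have z: "\<forall>k\<in>{..m} - {m}. f k p * ore_xpow_times \<sigma> \<Delta> k g m p = 0"
      using xpow_props[OF assms(2)] by auto
    have "(\<Sum>k\<le>m. f k p * ore_xpow_times \<sigma> \<Delta> k g m p)
        = f m p * ore_xpow_times \<sigma> \<Delta> m g m p + (\<Sum>k\<in>{..m} - {m}. f k p * ore_xpow_times \<sigma> \<Delta> k g m p)"
      by (rule sum.remove) auto
    also have "\<dots> = f m p * ore_xpow_times \<sigma> \<Delta> m g m p"
      using sum.neutral[OF z] by simp
    finally show ?thesis .
  qed
  also have "\<dots> = 0"
    using xpow_props[OF assms(2), of m g] ne by (simp add: g_def)
  finally show "f m p = 0" using eq by (simp add: ore_mult_left_def g_def)
qed

end
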